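(* Let $A\in\mathbb{R}^{m\times n}$, $L\in\mathbb{R}^{p\times n}$ with $\mathcal{N}(A)\cap\mathcal{N}(L)=\{0\}$, let $b\in\mathbb{R}^m$ and $\mu>0$. Let $\tilde V_1\in\mathbb{R}^{n\times l}$ have orthonormal columns, and set $\widehat A = A\tilde V_1$, $\widehat L = L\tilde V_1$. Suppose the matrix pair $(\widehat A,\widehat L)$ has a generalized SVD $$\widehat A = \widehat U \widehat C \widehat G^{-1},\qquad \widehat L = \widehat V\widehat S\widehat G^{-1},$$ where $\widehat U\in\mathbb{R}^{m\times l}$ and $\widehat V\in\mathbb{R}^{p\times l}$ have orthonormal columns, $\widehat C,\widehat S\in\mathbb{R}^{l\times l}$ are diagonal with nonnegative entries and $\widehat C^T\widehat C+\widehat S^T\widehat S=I$, and $\widehat G\in\mathbb{R}^{l\times l}$ is nonsingular. Define $$\widetilde A = A\tilde V_1\tilde V_1^T,\qquad \widetilde L = L\tilde V_1\tilde V_1^T.$$ Then the vector $$\tilde V_1 \widehat G(\widehat C^T\widehat C+\mu^2\widehat S^T\widehat S)^{-1}\widehat C^T\widehat U^T b$$ is the least-squares solution with minimum norm of $$\min_{x\in\mathbb{R}^n}\|\widetilde A x - b\|^2+\mu^2\|\widetilde L x\|^2,$$ i.e. the minimizer of this problem having minimal Euclidean norm.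
   Context: All norms are Euclidean 2-norms; $\mathcal{N}(M)$ denotes the null space of a matrix $M$. In the paper, $\tilde V_1$ is typically obtained as the approximate right singular vectors of $A$ from a randomized SVD, but the statement holds for any $\tilde V_1$ with orthonormal columns. *)

theory Defs
  imports "HOL-Analysis.Analysis"
begin

definition orthonormal_cols :: "real^'l^'k \<Rightarrow> bool" where
  "orthonormal_cols Q \<longleftrightarrow> transpose Q ** Q = mat 1"

definition nonneg_diag :: "real^'l^'l \<Rightarrow> bool" where
  "nonneg_diag D \<longleftrightarrow> (\<forall>i j. i \<noteq> j \<longrightarrow> D $ i $ j = 0) \<and> (\<forall>i. D $ i $ i \<ge> 0)"

definition min_norm_minimizer :: "('a::real_normed_vector \<Rightarrow> real) \<Rightarrow> 'a \<Rightarrow> bool" where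
  "min_norm_minimizer J x \<longleftrightarrow>
     (\<forall>z. J x \<le> J z) \<and> (\<forall>y. (\<forall>z. J y \<le> J z) \<longrightarrow> norm x \<le> norm y)"

end

theory Submission
  imports Defs
begin


lemma minv: assumes "invertible (A::real^'n^'n)"
  shows "A ** matrix_inv A = mat 1" "matrix_inv A ** A = mat 1"
proof -
  have "\<exists>A'. A ** A' = mat 1 \<and> A' ** A = mat 1" using assms unfolding invertible_def by blast
  from someI_ex[OF this] show "A ** matrix_inv A = mat 1" "matrix_inv A ** A = mat 1"
    unfolding matrix_inv_def by auto
qed

lemma inner_mv: "inner ((Q::real^'a^'b) *v v) w = inner v (transpose Q *v w)"
  by (metis dot_lmul_matrix vector_transpose_matrix)

lemma on_inner: assumes "orthonormal_cols (Q::real^'a^'b)"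
  shows "inner (Q *v v) (Q *v w) = inner v w"
  using assms unfolding orthonormal_cols_def
  by (simp add: inner_mv matrix_vector_mul_assoc)

lemma on_norm: assumes "orthonormal_cols (Q::real^'a^'b)"
  shows "norm (Q *v v) = norm v"
  using on_inner[OF assms, of v v] by (simp add: norm_eq_sqrt_inner)

lemma on_transp_norm: assumes "orthonormal_cols (Q::real^'a^'b)"
  shows "norm (transpose Q *v y) \<le> norm y"
proof -
  have "(norm (transpose Q *v y))\<^sup>2 = inner (transpose Q *v y) (transpose Q *v y)"
    by (simp add: power2_norm_eq_inner)
  also have "\<dots> = inner y (Q *v (transpose Q *v y))"
    by (metis inner_mv transpose_transpose)
  also have "\<dots> \<le> norm y * norm (Q *v (transpose Q *v y))"
    by (rule Cauchy_Schwarz_ineq2[THEN order_trans[OF abs_ge_self]])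
  also have "\<dots> = norm y * norm (transpose Q *v y)" using on_norm[OF assms] by simp
  finally have "norm (transpose Q *v y) * norm (transpose Q *v y) \<le> norm y * norm (transpose Q *v y)"
    by (simp add: power2_eq_square)
  thus ?thesis
    by (metis mult_right_le_imp_le norm_ge_zero order.order_iff_strict mult_zero_right linorder_not_le)
qed

theorem lemma1:
  fixes A :: "real^'n^'m" and L :: "real^'n^'p" and b :: "real^'m" and \<mu> :: real
    and V1 :: "real^'l^'n"
    and U :: "real^'l^'m" and V :: "real^'l^'p"
    and C :: "real^'l^'l" and S :: "real^'l^'l" and G :: "real^'l^'l"
  assumes null: "\<forall>x. A *v x = 0 \<and> L *v x = 0 \<longrightarrow> x = 0"
    and mu: "\<mu> > 0"
    and V1_on: "orthonormal_cols V1"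
    and U_on: "orthonormal_cols U"
    and V_on: "orthonormal_cols V"
    and C_diag: "nonneg_diag C"
    and S_diag: "nonneg_diag S"
    and CS: "transpose C ** C + transpose S ** S = mat 1"
    and G_inv: "invertible G"
    and gsvd_A: "A ** V1 = U ** C ** matrix_inv G"
    and gsvd_L: "L ** V1 = V ** S ** matrix_inv G"
  shows "min_norm_minimizer
           (\<lambda>x. (norm ((A ** V1 ** transpose V1) *v x - b))\<^sup>2
                 + \<mu>\<^sup>2 * (norm ((L ** V1 ** transpose V1) *v x))\<^sup>2)
           ((V1 ** G ** matrix_inv (transpose C ** C + \<mu>\<^sup>2 *\<^sub>R (transpose S ** S))
                   ** transpose C ** transpose U) *v b)"
proof -
  define D where "D = transpose C ** C + \<mu>\<^sup>2 *\<^sub>R (transpose S ** S)"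
  define Gi where "Gi = matrix_inv G"
  define c where "c = transpose C *v (transpose U *v b)"
  define q where "q = (\<lambda>z. (norm (C *v z))\<^sup>2 + \<mu>\<^sup>2 * (norm (S *v z))\<^sup>2)"
  define g where "g = (\<lambda>z. (norm (U *v (C *v z) - b))\<^sup>2 + \<mu>\<^sup>2 * (norm (V *v (S *v z)))\<^sup>2)"
  define J where "J = (\<lambda>x. (norm ((A ** V1 ** transpose V1) *v x - b))\<^sup>2
                 + \<mu>\<^sup>2 * (norm ((L ** V1 ** transpose V1) *v x))\<^sup>2)"
  have GGi: "G ** Gi = mat 1" "Gi ** G = mat 1" using minv[OF G_inv] unfolding Gi_def by auto
  have Dv: "D *v z = transpose C *v (C *v z) + \<mu>\<^sup>2 *\<^sub>R (transpose S *v (S *v z))" for z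
    unfolding D_def by (simp add: matrix_vector_mult_add_rdistrib scaleR_matrix_vector_assoc[symmetric]
       matrix_vector_mul_assoc)
  have qD: "inner z (D *v w) = inner (C *v z) (C *v w) + \<mu>\<^sup>2 * inner (S *v z) (S *v w)" for z w
    unfolding Dv by (simp add: inner_add_right inner_mv)
  have CSid: "(norm (C *v z))\<^sup>2 + (norm (S *v z))\<^sup>2 = (norm z)\<^sup>2" for z
  proof -
    have "inner z ((transpose C ** C + transpose S ** S) *v z) = inner z z" using CS by simp
    hence "inner (C *v z) (C *v z) + inner (S *v z) (S *v z) = inner z z"
      by (simp add: matrix_vector_mult_add_rdistrib inner_add_right inner_mv matrix_vector_mul_assoc[symmetric])
    thus ?thesis by (simp add: power2_norm_eq_inner)
  qed
  have q0: "q d = 0 \<Longrightarrow> d = 0" for d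
  proof -
    assume "q d = 0"
    moreover have "0 \<le> (norm (C *v d))\<^sup>2" "0 \<le> \<mu>\<^sup>2 * (norm (S *v d))\<^sup>2" by simp_all
    ultimately have "(norm (C *v d))\<^sup>2 = 0" "\<mu>\<^sup>2 * (norm (S *v d))\<^sup>2 = 0"
      unfolding q_def by linarith+
    hence "(norm (C *v d))\<^sup>2 = 0" "(norm (S *v d))\<^sup>2 = 0" using mu by simp_all
    thus "d = 0" using CSid[of d] by simp
  qed
  have qnn: "q d \<ge> 0" for d unfolding q_def by simp
  have Dker: "\<forall>w. D *v w = 0 \<longrightarrow> w = 0"
  proof (intro allI impI)
    fix w assume "D *v w = 0"
    hence "inner w (D *v w) = 0" by simp
    hence "q w = 0" unfolding qD q_def by (simp add: power2_norm_eq_inner)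
    thus "w = 0" by (rule q0)
  qed
  then obtain B where "B ** D = mat 1" using matrix_left_invertible_ker by blast
  hence "invertible D" unfolding invertible_def using matrix_left_right_inverse by blast
  hence DDi: "D ** matrix_inv D = mat 1" by (rule minv)
  define zs where "zs = matrix_inv D *v c"
  have Dzs: "D *v zs = c" unfolding zs_def by (simp add: matrix_vector_mul_assoc DDi)
  have gexp: "g z = q z - 2 * inner z c + (norm b)\<^sup>2" for z
  proof -
    have "(norm (U *v (C *v z) - b))\<^sup>2 = (norm (C *v z))\<^sup>2 - 2 * inner (U *v (C *v z)) b + (norm b)\<^sup>2"
      using on_inner[OF U_on] by (simp add: power2_norm_eq_inner inner_diff_left inner_diff_right inner_commute)
    moreover have "inner (U *v (C *v z)) b = inner z c" unfolding c_def by (simp add: inner_mv)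
    moreover have "norm (V *v (S *v z)) = norm (S *v z)" using on_norm[OF V_on] .
    ultimately show ?thesis unfolding g_def q_def by simp
  qed
  have qsplit: "q (zs + d) = q zs + q d + 2 * inner d c" for d
  proof -
    have "inner d c = inner (C *v d) (C *v zs) + \<mu>\<^sup>2 * inner (S *v d) (S *v zs)"
      using qD[of d zs] Dzs by simp
    thus ?thesis unfolding q_def
      by (simp add: power2_norm_eq_inner matrix_vector_right_distrib inner_add_left inner_add_right
          inner_commute algebra_simps)
  qed
  have gmin: "g (zs + d) = g zs + q d" for d
    using qsplit[of d] unfolding gexp by (simp add: inner_add_left)
  have Jg: "J x = g (Gi *v (transpose V1 *v x))" for x
  proof -
    have "(A ** V1 ** transpose V1) *v x = U *v (C *v (Gi *v (transpose V1 *v x)))"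
      by (simp only: matrix_vector_mul_assoc matrix_mul_assoc gsvd_A Gi_def)
    moreover have "(L ** V1 ** transpose V1) *v x = V *v (S *v (Gi *v (transpose V1 *v x)))"
      by (simp only: matrix_vector_mul_assoc matrix_mul_assoc gsvd_L Gi_def)
    ultimately show ?thesis unfolding J_def g_def by simp
  qed
  define x0 where "x0 = V1 *v (G *v zs)"
  have x0eq: "(V1 ** G ** matrix_inv D ** transpose C ** transpose U) *v b = x0"
    unfolding x0_def zs_def c_def by (simp only: matrix_vector_mul_assoc matrix_mul_assoc)
  have "transpose V1 *v x0 = G *v zs" using V1_on unfolding x0_def orthonormal_cols_def
    by (simp add: matrix_vector_mul_assoc matrix_mul_assoc del: vector_transpose_matrix)
  hence Jx0: "J x0 = g zs" using GGi by (simp add: Jg matrix_vector_mul_assoc del: vector_transpose_matrix)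
  have x0min: "J x0 \<le> J z" for z
  proof -
    have "J z = g zs + q (Gi *v (transpose V1 *v z) - zs)"
      using gmin[of "Gi *v (transpose V1 *v z) - zs"] Jg[of z] by simp
    thus ?thesis using qnn[of "Gi *v (transpose V1 *v z) - zs"] Jx0 by linarith
  qed
  have "norm x0 \<le> norm y" if ymin: "\<forall>z. J y \<le> J z" for y
  proof -
    define d where "d = Gi *v (transpose V1 *v y) - zs"
    have "g (zs + d) = g zs + q d" by (rule gmin)
    moreover have "g (zs + d) = J y" unfolding d_def by (simp add: Jg)
    moreover have "J y \<le> J x0" using ymin by blast
    ultimately have "q d \<le> 0" using Jx0 by simp
    hence "d = 0" using qnn[of d] q0 by simp
    hence "Gi *v (transpose V1 *v y) = zs" unfolding d_def by simp
    hence "G *v zs = transpose V1 *v y" using GGi by (metis matrix_vector_mul_assoc matrix_vector_mul_lid)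
    hence "norm x0 = norm (transpose V1 *v y)" unfolding x0_def using on_norm[OF V1_on] by simp
    thus ?thesis using on_transp_norm[OF V1_on] by simp
  qed
  thus ?thesis using x0min unfolding min_norm_minimizer_def J_def[symmetric] D_def[symmetric] x0eq
    by blast
qed

end
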